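(* Let $M\le N$ and $\mathbf{A}\in\mathbb{R}^{M\times N}$ with full row rank. Let $\lambda>0$ and let $\rho:\mathbb{R}^{M\times M}\to\mathbb{R}$ be differentiable and $\mu$-strongly convex ($\mu>0$). Fix constants $K>0$ and $c>0$ and let $\mathcal{P}_{K,c}$ be the set of probability distributions $\pi$ of pairs $(\mathbf{x},\mathbf{y})\in\mathbb{R}^N\times\mathbb{R}^M$ with $\mathbb{E}_\pi\|\mathbf{x}\|_2^2\le K$, $\mathbb{E}_\pi\|\mathbf{y}\|_2^2\le K$, and $\mathbb{E}_\pi[\mathbf{y}\mathbf{y}^\top]\succeq c\,\mathbf{I}$. For $\pi\in\mathcal{P}_{K,c}$ let $\mathbf{B}^\ast_\pi$ be the unique minimizer over $\mathbf{B}\in\mathbb{R}^{M\times M}$ of $F_\pi(\mathbf{B})=\mathbb{E}_\pi\|\mathbf{A}^\top\mathbf{B}\mathbf{y}-\mathbf{x}\|_2^2+\lambda\rho(\mathbf{B})$. Then there is a constant $C>0$, depending on $\mathbf{A},K,c,\mu$ and $\nabla\rho(\mathbf{0})$ but not on $\lambda$, such that for all $\pi,\pi'\in\mathcal{P}_{K,c}$, $$\|\mathbf{B}^\ast_\pi-\mathbf{B}^\ast_{\pi'}\|_F\le\frac{C}{\lambda\mu}\,W_2(\pi,\pi').$$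
   Context: $\|\cdot\|_F$ is the Frobenius norm and $\nabla\rho$ is the gradient with respect to the Frobenius inner product; $\rho$ is $\mu$-strongly convex if $\rho-\frac{\mu}{2}\|\cdot\|_F^2$ is convex. $W_2$ denotes the 2-Wasserstein distance between probability distributions on $\mathbb{R}^N\times\mathbb{R}^M\cong\mathbb{R}^{N+M}$ with the Euclidean norm: $W_2(\pi,\pi')^2=\inf\mathbb{E}\|(\mathbf{x},\mathbf{y})-(\mathbf{x}',\mathbf{y}')\|_2^2$ over all couplings of $\pi$ and $\pi'$. *)

theory Defs
  imports "HOL-Probability.Probability"
begin

definition outer :: "real^'m \<Rightarrow> real^'m^'m" where
  "outer y = (\<chi> i j. y $ i * y $ j)"

definition loewner_ge :: "real^'m^'m \<Rightarrow> real^'m^'m \<Rightarrow> bool" where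
  "loewner_ge S T \<longleftrightarrow> (\<forall>v. v \<bullet> ((S - T) *v v) \<ge> 0)"

definition P_Kc :: "real \<Rightarrow> real \<Rightarrow> ((real^'n) \<times> (real^'m)) measure set" where
  "P_Kc K c = {\<pi>. prob_space \<pi> \<and> sets \<pi> = sets borel \<and>
      (\<integral>\<^sup>+ p. ennreal ((norm (fst p))\<^sup>2) \<partial>\<pi>) \<le> ennreal K \<and>
      (\<integral>\<^sup>+ p. ennreal ((norm (snd p))\<^sup>2) \<partial>\<pi>) \<le> ennreal K \<and>
      integrable \<pi> (\<lambda>p. outer (snd p)) \<and>
      loewner_ge (integral\<^sup>L \<pi> (\<lambda>p. outer (snd p))) (c *\<^sub>R mat 1)}"

definition Fobj :: "real^'n^'m \<Rightarrow> real \<Rightarrow> (real^'m^'m \<Rightarrow> real)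
    \<Rightarrow> ((real^'n) \<times> (real^'m)) measure \<Rightarrow> real^'m^'m \<Rightarrow> real" where
  "Fobj A lam rho \<pi> B =
     (\<integral>p. (norm (transpose A *v (B *v snd p) - fst p))\<^sup>2 \<partial>\<pi>) + lam * rho B"

definition couplings :: "('a::topological_space) measure \<Rightarrow> 'a measure \<Rightarrow> ('a \<times> 'a) measure set" where
  "couplings \<pi> \<pi>' = {\<gamma>. prob_space \<gamma> \<and> sets \<gamma> = sets borel \<and>
      distr \<gamma> borel fst = \<pi> \<and> distr \<gamma> borel snd = \<pi>'}"

text \<open>2-Wasserstein distance (Euclidean norm on the pair space R^N x R^M = R^(N+M)).\<close>
definition W2 :: "('a::euclidean_space) measure \<Rightarrow> 'a measure \<Rightarrow> real" where
  "W2 \<pi> \<pi>' = sqrt (enn2real (INF \<gamma>\<in>couplings \<pi> \<pi>'.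
       \<integral>\<^sup>+ pq. ennreal ((norm (fst pq - snd pq))\<^sup>2) \<partial>\<gamma>))"

end

theory Submission
  imports Defs
begin

lemma meas_cont:
  assumes "sets M = sets (borel::'a::topological_space measure)" "continuous_on UNIV (f::'a \<Rightarrow> 'b::topological_space)"
  shows "f \<in> borel_measurable M"
  using measurable_cong_sets[OF assms(1) refl] borel_measurable_continuous_onI[OF assms(2)] by blast

lemma PKc_D:
  assumes "\<pi> \<in> P_Kc K c"
  shows "prob_space \<pi>" "sets \<pi> = sets borel"
    "(\<integral>\<^sup>+ p. ennreal ((norm (fst p))\<^sup>2) \<partial>\<pi>) \<le> ennreal K"
    "(\<integral>\<^sup>+ p. ennreal ((norm (snd p))\<^sup>2) \<partial>\<pi>) \<le> ennreal K"
    "integrable \<pi> (\<lambda>p. outer (snd p))"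
    "loewner_ge (integral\<^sup>L \<pi> (\<lambda>p. outer (snd p))) (c *\<^sub>R mat 1)"
  using assms by (auto simp: P_Kc_def)

lemma int_quad:
  fixes \<pi> :: "((real^'n) \<times> (real^'m)) measure" and f :: "(real^'n) \<times> (real^'m) \<Rightarrow> real"
  assumes "\<pi> \<in> P_Kc K c" "continuous_on UNIV f" "C \<ge> 0"
    "\<And>p. \<bar>f p\<bar> \<le> C * ((norm (fst p))\<^sup>2 + (norm (snd p))\<^sup>2)"
  shows "integrable \<pi> f"
proof -
  note D = PKc_D[OF assms(1)]
  have mf[measurable]: "f \<in> borel_measurable \<pi>" by (rule meas_cont[OF D(2) assms(2)])
  have m1[measurable]: "(\<lambda>p. (norm (fst p))\<^sup>2) \<in> borel_measurable \<pi>"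
    by (rule meas_cont[OF D(2)]) (intro continuous_intros)
  have m2[measurable]: "(\<lambda>p. (norm (snd p))\<^sup>2) \<in> borel_measurable \<pi>"
    by (rule meas_cont[OF D(2)]) (intro continuous_intros)
  have "(\<integral>\<^sup>+p. ennreal (norm (f p)) \<partial>\<pi>) \<le> (\<integral>\<^sup>+p. ennreal C * (ennreal ((norm (fst p))\<^sup>2) + ennreal ((norm (snd p))\<^sup>2)) \<partial>\<pi>)"
    apply (rule nn_integral_mono)
    using assms(4) assms(3) by (simp add: ennreal_mult[symmetric] ennreal_plus[symmetric] del: ennreal_plus)
  also have "\<dots> = ennreal C * ((\<integral>\<^sup>+p. ennreal ((norm (fst p))\<^sup>2) \<partial>\<pi>) + (\<integral>\<^sup>+p. ennreal ((norm (snd p))\<^sup>2) \<partial>\<pi>))"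
    by (simp add: nn_integral_cmult nn_integral_add)
  also have "\<dots> \<le> ennreal C * (ennreal K + ennreal K)"
    using D(3,4) by (intro mult_left_mono add_mono) auto
  also have "\<dots> < \<infinity>" by (simp add: ennreal_mult_less_top)
  finally show ?thesis by (intro integrableI_bounded mf)
qed

lemma int_bound:
  fixes \<pi> :: "'a measure" and f :: "'a \<Rightarrow> real"
  assumes "f \<in> borel_measurable \<pi>" "\<And>p. f p \<ge> 0" "(\<integral>\<^sup>+ p. ennreal (f p) \<partial>\<pi>) \<le> ennreal K" "K \<ge> 0"
  shows "integral\<^sup>L \<pi> f \<le> K"
proof -
  have "integral\<^sup>L \<pi> f = enn2real (\<integral>\<^sup>+ p. ennreal (f p) \<partial>\<pi>)"
    by (rule integral_eq_nn_integral) (use assms in auto)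
  also have "\<dots> \<le> K" using assms(3,4)
    by (metis enn2real_ennreal enn2real_mono ennreal_neq_top top.not_eq_extremum)
  finally show ?thesis .
qed

lemma norm_sq_vec: "(norm (v::'b::real_normed_vector^'a))\<^sup>2 = (\<Sum>i\<in>UNIV. (norm (v$i))\<^sup>2)"
  by (simp add: norm_vec_def L2_set_def sum_nonneg)

lemma mv_norm: "norm ((M::real^'a^'b) *v x) \<le> norm M * norm x"
proof -
  have "(norm (M *v x))\<^sup>2 = (\<Sum>i\<in>UNIV. (M$i \<bullet> x)\<^sup>2)"
    by (simp add: norm_sq_vec matrix_mult_dot)
  also have "\<dots> \<le> (\<Sum>i\<in>UNIV. (norm (M$i) * norm x)\<^sup>2)"
  proof (rule sum_mono)
    fix i
    have "\<bar>M$i \<bullet> x\<bar> \<le> norm (M$i) * norm x" by (rule Cauchy_Schwarz_ineq2)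
    hence "\<bar>M$i \<bullet> x\<bar>\<^sup>2 \<le> (norm (M$i) * norm x)\<^sup>2" by (rule power_mono) simp
    thus "(M$i \<bullet> x)\<^sup>2 \<le> (norm (M$i) * norm x)\<^sup>2" by simp
  qed
  also have "\<dots> = (norm M * norm x)\<^sup>2"
    by (simp add: power_mult_distrib norm_sq_vec[of M] sum_distrib_right)
  finally show ?thesis
    by (rule power2_le_imp_le) simp
qed

lemma continuous_on_mv[continuous_intros]:
  "continuous_on S f \<Longrightarrow> continuous_on S (\<lambda>x. (M::real^'a^'b) *v f x)"
  by (rule continuous_on_compose2[OF linear_continuous_on[OF matrix_vector_mul_bounded_linear]]) auto

lemma sq_sub_le: "(norm (a - b::'a::real_normed_vector))\<^sup>2 \<le> 2 * (norm a)\<^sup>2 + 2 * (norm b)\<^sup>2"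
proof -
  have "norm (a - b) \<le> norm a + norm b" by (rule norm_triangle_ineq4)
  hence "(norm (a - b))\<^sup>2 \<le> (norm a + norm b)\<^sup>2" by (simp add: power_mono)
  also have "\<dots> \<le> 2 * (norm a)\<^sup>2 + 2 * (norm b)\<^sup>2"
  proof -
    have "0 \<le> (norm a - norm b)\<^sup>2" by simp
    thus ?thesis unfolding power2_sum power2_diff by linarith
  qed
  finally show ?thesis .
qed

lemma int_Phi:
  fixes \<pi> :: "((real^'n) \<times> (real^'m)) measure" and A :: "real^'n^'m" and B :: "real^'m^'m"
  assumes "\<pi> \<in> P_Kc K c"
  shows "integrable \<pi> (\<lambda>p. (norm (transpose A *v (B *v snd p) - fst p))\<^sup>2)"
proof (rule int_quad[OF assms, where C = "2 * (norm (transpose A) * norm B)\<^sup>2 + 2"])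
  show "continuous_on UNIV (\<lambda>p. (norm (transpose A *v (B *v snd p) - fst p))\<^sup>2)"
    by (intro continuous_intros)
  fix p :: "(real^'n) \<times> (real^'m)"
  have a0: "norm (transpose A *v (B *v snd p)) \<le> norm (transpose A) * (norm B * norm (snd p))"
    by (rule order_trans[OF mv_norm mult_left_mono[OF mv_norm norm_ge_zero]])
  have a: "norm (transpose A *v (B *v snd p)) \<le> norm (transpose A) * norm B * norm (snd p)"
    using a0 by (simp only: mult.assoc)
  have "(norm (transpose A *v (B *v snd p) - fst p))\<^sup>2 \<le> 2 * (norm (transpose A *v (B *v snd p)))\<^sup>2 + 2 * (norm (fst p))\<^sup>2"
    by (rule sq_sub_le)
  also have "\<dots> \<le> 2 * (norm (transpose A) * norm B * norm (snd p))\<^sup>2 + 2 * (norm (fst p))\<^sup>2"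
    using a by (intro add_mono mult_left_mono power_mono) auto
  also have "\<dots> \<le> (2 * (norm (transpose A) * norm B)\<^sup>2 + 2) * ((norm (fst p))\<^sup>2 + (norm (snd p))\<^sup>2)"
  proof -
    have e: "(norm (transpose A) * norm B * norm (snd p))\<^sup>2 = (norm (transpose A) * norm B)\<^sup>2 * (norm (snd p))\<^sup>2"
      by (simp add: power_mult_distrib)
    have "0 \<le> (norm (transpose A) * norm B)\<^sup>2 * (norm (fst p))\<^sup>2" by simp
    moreover have "0 \<le> (norm (snd p))\<^sup>2" by simp
    ultimately show ?thesis unfolding e by (simp add: distrib_left distrib_right)
  qed
  finally show "\<bar>(norm (transpose A *v (B *v snd p) - fst p))\<^sup>2\<bar> \<le> (2 * (norm (transpose A) * norm B)\<^sup>2 + 2) * ((norm (fst p))\<^sup>2 + (norm (snd p))\<^sup>2)"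
    by simp
qed simp


lemma mid_sq: "(norm ((1/2::real) *\<^sub>R (a + b::'a::real_inner)))\<^sup>2 = (norm a)\<^sup>2 / 2 + (norm b)\<^sup>2 / 2 - (norm (b - a))\<^sup>2 / 4"
  by (simp add: power2_norm_eq_inner inner_add_left inner_add_right inner_diff_left inner_diff_right inner_commute algebra_simps) (simp add: field_simps)

lemma growth:
  fixes \<pi> :: "((real^'n) \<times> (real^'m)) measure" and A :: "real^'n^'m" and B B1 :: "real^'m^'m"
  assumes "\<pi> \<in> P_Kc K c" "lam > 0"
    and cvx: "convex_on UNIV (\<lambda>B. rho B - \<mu> / 2 * (norm B)\<^sup>2)"
    and min: "\<forall>B. Fobj A lam rho \<pi> B1 \<le> Fobj A lam rho \<pi> B"
  shows "Fobj A lam rho \<pi> B - Fobj A lam rho \<pi> B1 \<ge> lam * \<mu> / 4 * (norm (B - B1))\<^sup>2"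
proof -
  define m where "m = (1/2::real) *\<^sub>R (B1 + B)"
  define \<Phi> where "\<Phi> = (\<lambda>B::real^'m^'m. \<integral>p. (norm (transpose A *v (B *v snd p) - fst p))\<^sup>2 \<partial>\<pi>)"
  have F: "Fobj A lam rho \<pi> X = \<Phi> X + lam * rho X" for X unfolding Fobj_def \<Phi>_def by simp
  have pt: "(norm (transpose A *v (m *v snd p) - fst p))\<^sup>2 \<le>
     (norm (transpose A *v (B1 *v snd p) - fst p))\<^sup>2 / 2 + (norm (transpose A *v (B *v snd p) - fst p))\<^sup>2 / 2" for p
  proof -
    have eq: "transpose A *v (m *v snd p) - fst p = (1/2::real) *\<^sub>R ((transpose A *v (B1 *v snd p) - fst p) + (transpose A *v (B *v snd p) - fst p))"
    proof -
      have h1: "m *v snd p = (1/2::real) *\<^sub>R (B1 *v snd p + B *v snd p)"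
        unfolding m_def by (simp add: matrix_vector_mult_add_rdistrib scaleR_matrix_vector_assoc[symmetric])
      have h2: "transpose A *v (m *v snd p) = (1/2::real) *\<^sub>R (transpose A *v (B1 *v snd p) + transpose A *v (B *v snd p))"
        unfolding h1 matrix_vector_mult_scaleR matrix_vector_right_distrib ..
      have h3: "(1/2::real) *\<^sub>R fst p + (1/2::real) *\<^sub>R fst p = fst p"
        by (simp add: scaleR_add_left[symmetric])
      show ?thesis unfolding h2 scaleR_add_right scaleR_diff_right using h3
        by (simp add: algebra_simps)
    qed
    have nn: "(norm ((transpose A *v (B *v snd p) - fst p) - (transpose A *v (B1 *v snd p) - fst p)))\<^sup>2 / 4 \<ge> 0"
      by simp
    show ?thesis unfolding eq using nn mid_sq[of "transpose A *v (B1 *v snd p) - fst p" "transpose A *v (B *v snd p) - fst p"]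
      by linarith
  qed
  have Phim: "\<Phi> m \<le> \<Phi> B1 / 2 + \<Phi> B / 2"
  proof -
    have "\<Phi> m \<le> (\<integral>p. (norm (transpose A *v (B1 *v snd p) - fst p))\<^sup>2 / 2 + (norm (transpose A *v (B *v snd p) - fst p))\<^sup>2 / 2 \<partial>\<pi>)"
      unfolding \<Phi>_def by (intro integral_mono int_Phi[OF assms(1)] Bochner_Integration.integrable_add integrable_divide pt)
    also have "\<dots> = \<Phi> B1 / 2 + \<Phi> B / 2"
      unfolding \<Phi>_def
      by (subst Bochner_Integration.integral_add; (intro integrable_divide int_Phi[OF assms(1)])?) (simp only: integral_divide_zero)
    finally show ?thesis .
  qed
  have "rho m - \<mu> / 2 * (norm m)\<^sup>2 \<le> (1 - 1/2) * (rho B1 - \<mu> / 2 * (norm B1)\<^sup>2) + (1/2) * (rho B - \<mu> / 2 * (norm B)\<^sup>2)"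
    using convex_onD[OF cvx, of "1/2" B1 B] unfolding m_def by (simp add: scaleR_add_right)
  moreover have "(norm m)\<^sup>2 = (norm B1)\<^sup>2 / 2 + (norm B)\<^sup>2 / 2 - (norm (B - B1))\<^sup>2 / 4"
    unfolding m_def by (rule mid_sq)
  ultimately have rhom: "rho m \<le> rho B1 / 2 + rho B / 2 - \<mu> / 8 * (norm (B - B1))\<^sup>2"
    by (simp add: algebra_simps)
  have "Fobj A lam rho \<pi> B1 \<le> Fobj A lam rho \<pi> m" using min by blast
  hence "\<Phi> B1 + lam * rho B1 \<le> \<Phi> m + lam * rho m" by (simp add: F)
  moreover have "lam * rho m \<le> lam * (rho B1 / 2 + rho B / 2 - \<mu> / 8 * (norm (B - B1))\<^sup>2)"
    using rhom assms(2) by (intro mult_left_mono) auto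
  ultimately show ?thesis using Phim by (simp add: F algebra_simps)
qed

lemma tangent:
  fixes rho :: "real^'m^'m \<Rightarrow> real"
  assumes cvx: "convex_on UNIV (\<lambda>B. rho B - \<mu> / 2 * (norm B)\<^sup>2)"
    and der: "(rho has_derivative (\<lambda>H. g \<bullet> H)) (at 0)"
  shows "rho B \<ge> rho 0 + g \<bullet> B + \<mu> / 2 * (norm B)\<^sup>2"
proof -
  have d1: "((\<lambda>t::real. t *\<^sub>R B) has_derivative (\<lambda>s. s *\<^sub>R B)) (at 0)"
    by (rule bounded_linear_imp_has_derivative) (rule bounded_linear_scaleR_left)
  have d2: "((\<lambda>t::real. rho (t *\<^sub>R B)) has_derivative (\<lambda>s. g \<bullet> (s *\<^sub>R B))) (at 0)"
  proof -
    have der': "(rho has_derivative (\<lambda>H. g \<bullet> H)) (at ((\<lambda>t::real. t *\<^sub>R B) 0))" using der by simp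
    show ?thesis by (rule has_derivative_compose[OF d1 der'])
  qed
  have fe: "(\<lambda>s. g \<bullet> (s *\<^sub>R B)) = (*) (g \<bullet> B)" by (auto simp: fun_eq_iff)
  have "((\<lambda>t::real. rho (t *\<^sub>R B)) has_field_derivative (g \<bullet> B)) (at 0)"
    using d2 unfolding fe has_field_derivative_def .
  hence L0: "((\<lambda>t. (rho (t *\<^sub>R B) - rho (0 *\<^sub>R B)) / (t - 0)) \<longlongrightarrow> g \<bullet> B) (at 0)"
    by (subst has_field_derivative_iff[symmetric])
  have L1: "((\<lambda>t. (rho (t *\<^sub>R B) - rho 0) / t) \<longlongrightarrow> g \<bullet> B) (at 0)"
    using L0 by simp
  have L: "((\<lambda>t. (rho (t *\<^sub>R B) - rho 0) / t) \<longlongrightarrow> g \<bullet> B) (at_right 0)"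
    by (rule tendsto_mono[OF at_le L1]) simp
  have R: "((\<lambda>t. rho B - rho 0 - \<mu> / 2 * (norm B)\<^sup>2 + \<mu> / 2 * t * (norm B)\<^sup>2) \<longlongrightarrow>
      rho B - rho 0 - \<mu> / 2 * (norm B)\<^sup>2 + \<mu> / 2 * 0 * (norm B)\<^sup>2) (at_right 0)"
    by (intro tendsto_add tendsto_mult tendsto_const tendsto_ident_at)
  have ev: "eventually (\<lambda>t. (rho (t *\<^sub>R B) - rho 0) / t \<le> rho B - rho 0 - \<mu> / 2 * (norm B)\<^sup>2 + \<mu> / 2 * t * (norm B)\<^sup>2) (at_right (0::real))"
    unfolding eventually_at_right_field
  proof (intro exI[of _ 1] conjI allI impI)
    fix t :: real assume t: "t > 0" "t < 1"
    have c: "rho ((1 - t) *\<^sub>R 0 + t *\<^sub>R B) - \<mu> / 2 * (norm ((1 - t) *\<^sub>R 0 + t *\<^sub>R B))\<^sup>2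
        \<le> (1 - t) * (rho 0 - \<mu> / 2 * (norm (0::real^'m^'m))\<^sup>2) + t * (rho B - \<mu> / 2 * (norm B)\<^sup>2)"
      by (rule convex_onD[OF cvx]) (use t in auto)
    have e1: "(1 - t) *\<^sub>R (0::real^'m^'m) + t *\<^sub>R B = t *\<^sub>R B" by simp
    have e2: "(norm (t *\<^sub>R B))\<^sup>2 = t\<^sup>2 * (norm B)\<^sup>2" by (simp add: power_mult_distrib)
    have c2: "rho (t *\<^sub>R B) - \<mu> / 2 * (t\<^sup>2 * (norm B)\<^sup>2) \<le> (1 - t) * rho 0 + t * (rho B - \<mu> / 2 * (norm B)\<^sup>2)"
      using c unfolding e1 e2 by simp
    have e3: "t * (rho B - rho 0 - \<mu> / 2 * (norm B)\<^sup>2 + \<mu> / 2 * t * (norm B)\<^sup>2)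
        = (1 - t) * rho 0 + t * (rho B - \<mu> / 2 * (norm B)\<^sup>2) + \<mu> / 2 * (t\<^sup>2 * (norm B)\<^sup>2) - rho 0"
      by (simp add: algebra_simps power2_eq_square)
    have "rho (t *\<^sub>R B) - rho 0 \<le> t * (rho B - rho 0 - \<mu> / 2 * (norm B)\<^sup>2 + \<mu> / 2 * t * (norm B)\<^sup>2)"
      unfolding e3 using c2 by linarith
    thus "(rho (t *\<^sub>R B) - rho 0) / t \<le> rho B - rho 0 - \<mu> / 2 * (norm B)\<^sup>2 + \<mu> / 2 * t * (norm B)\<^sup>2"
      using t(1) by (simp add: divide_le_eq mult.commute)
  qed simp
  have "g \<bullet> B \<le> rho B - rho 0 - \<mu> / 2 * (norm B)\<^sup>2 + \<mu> / 2 * 0 * (norm B)\<^sup>2"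
    by (rule tendsto_le[OF _ R L ev]) simp
  thus ?thesis by simp
qed

lemma outer_quad: "w \<bullet> (outer y *v w) = (y \<bullet> w)\<^sup>2"
proof -
  have "outer y *v w = (y \<bullet> w) *\<^sub>R y"
    by (simp add: vec_eq_iff outer_def matrix_vector_mult_def inner_vec_def sum_distrib_left algebra_simps)
  thus ?thesis by (simp add: power2_eq_square inner_commute)
qed

lemma bl_T: "bounded_linear (\<lambda>S::real^'m^'m. \<Sum>i\<in>UNIV. B$i \<bullet> (S *v B$i))"
proof (intro bounded_linear_sum)
  fix i
  have "linear (\<lambda>S::real^'m^'m. S *v B$i)"
    by (intro linearI) (simp_all add: matrix_vector_mult_add_rdistrib scaleR_matrix_vector_assoc)
  hence "bounded_linear (\<lambda>S::real^'m^'m. S *v B$i)" using linear_conv_bounded_linear by blast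
  thus "bounded_linear (\<lambda>S::real^'m^'m. B$i \<bullet> (S *v B$i))"
    using bounded_linear_compose[OF bounded_linear_inner_right] by blast
qed


lemma lowerE:
  fixes \<pi> :: "((real^'n) \<times> (real^'m)) measure" and A :: "real^'n^'m" and B :: "real^'m^'m"
  assumes P: "\<pi> \<in> P_Kc K c" and s: "\<And>v. s * norm v \<le> norm (transpose A *v v)" "s \<ge> 0"
  shows "c * s\<^sup>2 * (norm B)\<^sup>2 \<le> (\<integral>p. (norm (transpose A *v (B *v snd p)))\<^sup>2 \<partial>\<pi>)"
proof -
  note D = PKc_D[OF P]
  have nb: "norm (transpose A *v (B *v y)) \<le> norm (transpose A) * norm B * norm y" for y
  proof -
    have "norm (transpose A *v (B *v y)) \<le> norm (transpose A) * (norm B * norm y)"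
      by (rule order_trans[OF mv_norm mult_left_mono[OF mv_norm norm_ge_zero]])
    thus ?thesis by (simp only: mult.assoc)
  qed
  have int1: "integrable \<pi> (\<lambda>p. (norm (transpose A *v (B *v snd p)))\<^sup>2)"
  proof (rule int_quad[OF P, where C = "(norm (transpose A) * norm B)\<^sup>2"])
    show "continuous_on UNIV (\<lambda>p. (norm (transpose A *v (B *v snd p)))\<^sup>2)"
      by (intro continuous_intros)
    fix p :: "(real^'n) \<times> (real^'m)"
    have "(norm (transpose A *v (B *v snd p)))\<^sup>2 \<le> (norm (transpose A) * norm B * norm (snd p))\<^sup>2"
      using nb by (intro power_mono) auto
    also have "\<dots> \<le> (norm (transpose A) * norm B)\<^sup>2 * ((norm (fst p))\<^sup>2 + (norm (snd p))\<^sup>2)"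
      by (simp add: power_mult_distrib distrib_left)
    finally show "\<bar>(norm (transpose A *v (B *v snd p)))\<^sup>2\<bar> \<le> (norm (transpose A) * norm B)\<^sup>2 * ((norm (fst p))\<^sup>2 + (norm (snd p))\<^sup>2)"
      by simp
  qed simp
  have int2: "integrable \<pi> (\<lambda>p. (norm (B *v snd p))\<^sup>2)"
  proof (rule int_quad[OF P, where C = "(norm B)\<^sup>2"])
    show "continuous_on UNIV (\<lambda>p. (norm (B *v snd p))\<^sup>2)"
      by (intro continuous_intros)
    fix p :: "(real^'n) \<times> (real^'m)"
    have "(norm (B *v snd p))\<^sup>2 \<le> (norm B * norm (snd p))\<^sup>2"
      using mv_norm by (intro power_mono) auto
    also have "\<dots> \<le> (norm B)\<^sup>2 * ((norm (fst p))\<^sup>2 + (norm (snd p))\<^sup>2)"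
      by (simp add: power_mult_distrib distrib_left)
    finally show "\<bar>(norm (B *v snd p))\<^sup>2\<bar> \<le> (norm B)\<^sup>2 * ((norm (fst p))\<^sup>2 + (norm (snd p))\<^sup>2)"
      by simp
  qed simp
  define \<Sigma> where "\<Sigma> = integral\<^sup>L \<pi> (\<lambda>p. outer (snd p))"
  have eqT: "(norm (B *v y))\<^sup>2 = (\<Sum>i\<in>UNIV. B$i \<bullet> (outer y *v B$i))" for y
  proof -
    have "(norm (B *v y))\<^sup>2 = (\<Sum>i\<in>UNIV. (B$i \<bullet> y)\<^sup>2)" by (simp add: norm_sq_vec matrix_mult_dot)
    also have "\<dots> = (\<Sum>i\<in>UNIV. B$i \<bullet> (outer y *v B$i))" by (simp only: outer_quad inner_commute)
    finally show ?thesis .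
  qed
  have "(\<integral>p. (norm (B *v snd p))\<^sup>2 \<partial>\<pi>) = (\<integral>p. (\<Sum>i\<in>UNIV. B$i \<bullet> (outer (snd p) *v B$i)) \<partial>\<pi>)"
    by (simp only: eqT)
  also have "\<dots> = (\<Sum>i\<in>UNIV. B$i \<bullet> (\<Sigma> *v B$i))"
    unfolding \<Sigma>_def by (rule integral_bounded_linear[OF bl_T D(5)])
  also have "\<dots> \<ge> (\<Sum>i\<in>UNIV. c * (norm (B$i))\<^sup>2)"
  proof (rule sum_mono)
    fix i
    have "0 \<le> B$i \<bullet> ((\<Sigma> - c *\<^sub>R mat 1) *v B$i)"
      using D(6) unfolding loewner_ge_def \<Sigma>_def by blast
    also have "\<dots> = B$i \<bullet> (\<Sigma> *v B$i) - c * (norm (B$i))\<^sup>2"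
      by (simp add: matrix_vector_mult_diff_rdistrib scaleR_matrix_vector_assoc[symmetric] inner_diff_right power2_norm_eq_inner)
    finally show "c * (norm (B$i))\<^sup>2 \<le> B$i \<bullet> (\<Sigma> *v B$i)" by simp
  qed
  finally have E1: "c * (norm B)\<^sup>2 \<le> (\<integral>p. (norm (B *v snd p))\<^sup>2 \<partial>\<pi>)"
    by (simp add: norm_sq_vec[of B] sum_distrib_left)
  have "(\<integral>p. s\<^sup>2 * (norm (B *v snd p))\<^sup>2 \<partial>\<pi>) \<le> (\<integral>p. (norm (transpose A *v (B *v snd p)))\<^sup>2 \<partial>\<pi>)"
  proof (rule integral_mono[OF integrable_mult_right[OF int2] int1])
    fix p :: "(real^'n) \<times> (real^'m)"
    have "s * norm (B *v snd p) \<le> norm (transpose A *v (B *v snd p))" by (rule s(1))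
    hence "(s * norm (B *v snd p))\<^sup>2 \<le> (norm (transpose A *v (B *v snd p)))\<^sup>2"
      using s(2) by (intro power_mono) auto
    thus "s\<^sup>2 * (norm (B *v snd p))\<^sup>2 \<le> (norm (transpose A *v (B *v snd p)))\<^sup>2"
      by (simp add: power_mult_distrib)
  qed
  moreover have "(\<integral>p. s\<^sup>2 * (norm (B *v snd p))\<^sup>2 \<partial>\<pi>) = s\<^sup>2 * (\<integral>p. (norm (B *v snd p))\<^sup>2 \<partial>\<pi>)"
    by simp
  moreover have "s\<^sup>2 * (c * (norm B)\<^sup>2) \<le> s\<^sup>2 * (\<integral>p. (norm (B *v snd p))\<^sup>2 \<partial>\<pi>)"
    using E1 by (intro mult_left_mono) auto
  ultimately show ?thesis by (simp add: algebra_simps)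
qed


lemma Bbound:
  fixes \<pi> :: "((real^'n) \<times> (real^'m)) measure" and A :: "real^'n^'m" and B1 :: "real^'m^'m"
  assumes P: "\<pi> \<in> P_Kc K c" and lam: "lam > 0" and mu: "\<mu> > 0" and K: "K > 0" and kap: "\<kappa> > 0"
    and low: "\<And>B. \<kappa> * (norm B)\<^sup>2 \<le> (\<integral>p. (norm (transpose A *v (B *v snd p)))\<^sup>2 \<partial>\<pi>)"
    and cvx: "convex_on UNIV (\<lambda>B. rho B - \<mu> / 2 * (norm B)\<^sup>2)"
    and der: "(rho has_derivative (\<lambda>H. g \<bullet> H)) (at 0)"
    and min: "\<forall>B. Fobj A lam rho \<pi> B1 \<le> Fobj A lam rho \<pi> B"
  shows "norm B1 \<le> 2 * norm g / \<mu> + sqrt (4 * K / \<kappa>)"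
proof -
  note D = PKc_D[OF P]
  define b where "b = norm B1"
  have b0: "b \<ge> 0" unfolding b_def by simp
  have mx[measurable]: "(\<lambda>p. (norm (fst p))\<^sup>2) \<in> borel_measurable \<pi>"
    by (rule meas_cont[OF D(2)]) (intro continuous_intros)
  have intx: "integrable \<pi> (\<lambda>p. (norm (fst p))\<^sup>2)"
    by (rule int_quad[OF P, where C=1]) (intro continuous_intros, auto)
  have Ex: "(\<integral>p. (norm (fst p))\<^sup>2 \<partial>\<pi>) \<le> K"
    by (rule int_bound[OF mx _ D(3)]) (use K in auto)
  have intu: "integrable \<pi> (\<lambda>p. (norm (transpose A *v (B1 *v snd p)))\<^sup>2)"
  proof (rule int_quad[OF P, where C = "(norm (transpose A) * norm B1)\<^sup>2"])
    show "continuous_on UNIV (\<lambda>p. (norm (transpose A *v (B1 *v snd p)))\<^sup>2)"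
      by (intro continuous_intros)
    fix p :: "(real^'n) \<times> (real^'m)"
    have "norm (transpose A *v (B1 *v snd p)) \<le> norm (transpose A) * (norm B1 * norm (snd p))"
      by (rule order_trans[OF mv_norm mult_left_mono[OF mv_norm norm_ge_zero]])
    hence "(norm (transpose A *v (B1 *v snd p)))\<^sup>2 \<le> (norm (transpose A) * (norm B1 * norm (snd p)))\<^sup>2"
      by (intro power_mono) auto
    also have "\<dots> \<le> (norm (transpose A) * norm B1)\<^sup>2 * ((norm (fst p))\<^sup>2 + (norm (snd p))\<^sup>2)"
      by (simp add: power_mult_distrib distrib_left)
    finally show "\<bar>(norm (transpose A *v (B1 *v snd p)))\<^sup>2\<bar> \<le> (norm (transpose A) * norm B1)\<^sup>2 * ((norm (fst p))\<^sup>2 + (norm (snd p))\<^sup>2)"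
      by simp
  qed simp
  have Phi0: "Fobj A lam rho \<pi> 0 = (\<integral>p. (norm (fst p))\<^sup>2 \<partial>\<pi>) + lam * rho 0"
    unfolding Fobj_def by simp
  have "(\<integral>p. (norm (transpose A *v (B1 *v snd p)))\<^sup>2 / 2 - (norm (fst p))\<^sup>2 \<partial>\<pi>)
      \<le> (\<integral>p. (norm (transpose A *v (B1 *v snd p) - fst p))\<^sup>2 \<partial>\<pi>)"
  proof (rule integral_mono[OF Bochner_Integration.integrable_diff[OF integrable_divide[OF intu] intx] int_Phi[OF P]])
    fix p :: "(real^'n) \<times> (real^'m)"
    have "(norm ((transpose A *v (B1 *v snd p) - fst p) - (- fst p)))\<^sup>2 \<le>
        2 * (norm (transpose A *v (B1 *v snd p) - fst p))\<^sup>2 + 2 * (norm (- fst p))\<^sup>2"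
      by (rule sq_sub_le)
    thus "(norm (transpose A *v (B1 *v snd p)))\<^sup>2 / 2 - (norm (fst p))\<^sup>2 \<le> (norm (transpose A *v (B1 *v snd p) - fst p))\<^sup>2"
      by simp
  qed
  moreover have "(\<integral>p. (norm (transpose A *v (B1 *v snd p)))\<^sup>2 / 2 - (norm (fst p))\<^sup>2 \<partial>\<pi>)
      = (\<integral>p. (norm (transpose A *v (B1 *v snd p)))\<^sup>2 \<partial>\<pi>) / 2 - (\<integral>p. (norm (fst p))\<^sup>2 \<partial>\<pi>)"
    by (subst Bochner_Integration.integral_diff[OF integrable_divide[OF intu] intx]) (simp only: integral_divide_zero)
  ultimately have PhiB1: "\<kappa> * b\<^sup>2 / 2 - K \<le> (\<integral>p. (norm (transpose A *v (B1 *v snd p) - fst p))\<^sup>2 \<partial>\<pi>)"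
    using low[of B1] Ex unfolding b_def by linarith
  have "rho B1 \<ge> rho 0 + g \<bullet> B1 + \<mu> / 2 * b\<^sup>2" unfolding b_def by (rule tangent[OF cvx der])
  moreover have "g \<bullet> B1 \<ge> - (norm g * b)" unfolding b_def
    using Cauchy_Schwarz_ineq2[of g B1] by linarith
  ultimately have rb: "rho B1 - rho 0 \<ge> \<mu> / 2 * b\<^sup>2 - norm g * b" by linarith
  have "Fobj A lam rho \<pi> B1 \<le> Fobj A lam rho \<pi> 0" using min by blast
  hence "(\<integral>p. (norm (transpose A *v (B1 *v snd p) - fst p))\<^sup>2 \<partial>\<pi>) + lam * rho B1 \<le> (\<integral>p. (norm (fst p))\<^sup>2 \<partial>\<pi>) + lam * rho 0"
    unfolding Phi0 by (simp add: Fobj_def)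
  hence "\<kappa> * b\<^sup>2 / 2 - K + lam * (rho B1 - rho 0) \<le> K"
    using PhiB1 Ex by (simp add: algebra_simps)
  moreover have "lam * (rho B1 - rho 0) \<ge> lam * (\<mu> / 2 * b\<^sup>2 - norm g * b)"
    using rb lam by (intro mult_left_mono) auto
  ultimately have key: "\<kappa> * b\<^sup>2 / 2 + lam * (\<mu> / 2 * b\<^sup>2 - norm g * b) \<le> 2 * K" by linarith
  show ?thesis
  proof (cases "b \<le> 2 * norm g / \<mu>")
    case True
    moreover have "sqrt (4 * K / \<kappa>) \<ge> 0" using K kap by simp
    ultimately show ?thesis unfolding b_def by linarith
  next
    case False
    hence "\<mu> * b \<ge> 2 * norm g" using mu by (simp add: field_simps)
    moreover have "\<mu> / 2 * b\<^sup>2 - norm g * b = b * (\<mu> * b - 2 * norm g) / 2"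
      by (simp add: power2_eq_square algebra_simps)
    moreover have "b * (\<mu> * b - 2 * norm g) \<ge> 0" using b0 \<open>\<mu> * b \<ge> 2 * norm g\<close> by simp
    ultimately have "\<mu> / 2 * b\<^sup>2 - norm g * b \<ge> 0" by linarith
    hence "lam * (\<mu> / 2 * b\<^sup>2 - norm g * b) \<ge> 0" using lam by simp
    hence "\<kappa> * b\<^sup>2 \<le> 4 * K" using key by linarith
    hence "b\<^sup>2 \<le> 4 * K / \<kappa>" using kap by (simp add: field_simps)
    hence "b \<le> sqrt (4 * K / \<kappa>)" using b0 by (simp add: real_le_rsqrt)
    moreover have "norm g / \<mu> \<ge> 0" using mu by simp
    ultimately show ?thesis unfolding b_def by linarith
  qed
qed

lemma mvmv_norm: "norm ((T::real^'a^'b) *v ((d::real^'c^'a) *v y)) \<le> norm T * norm d * norm y"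
proof -
  have "norm (T *v (d *v y)) \<le> norm T * (norm d * norm y)"
    by (rule order_trans[OF mv_norm mult_left_mono[OF mv_norm norm_ge_zero]])
  thus ?thesis by (simp only: mult.assoc)
qed

lemma nsnd: "norm (snd z) \<le> norm z" by (metis norm_snd_le prod.collapse)
lemma nfst: "norm (fst z) \<le> norm z" by (metis norm_fst_le prod.collapse)

lemma lip:
  fixes T :: "real^'m^'n" and d S :: "real^'m^'m" and p q :: "(real^'n) \<times> (real^'m)"
  defines "ps \<equiv> (\<lambda>p::(real^'n) \<times> (real^'m). T *v (d *v snd p))"
    and "ch \<equiv> (\<lambda>p::(real^'n) \<times> (real^'m). T *v (S *v snd p) - 2 *\<^sub>R fst p)"
  shows "\<bar>ps p \<bullet> ch p - ps q \<bullet> ch q\<bar> \<le> norm T * norm d * (norm T * norm S + 2) * norm (p - q) * (norm p + norm q)"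
proof -
  define a where "a = norm T * norm d"
  define b where "b = norm T * norm S + 2"
  have a0: "a \<ge> 0" and b0: "b \<ge> 0" unfolding a_def b_def by auto
  have linps: "ps p - ps q = ps (p - q)" unfolding ps_def
    by (simp add: matrix_vector_mult_diff_distrib)
  have linch: "ch p - ch q = ch (p - q)" unfolding ch_def
    by (simp add: matrix_vector_mult_diff_distrib scaleR_diff_right)
  have nps: "norm (ps z) \<le> a * norm z" for z
  proof -
    have "norm (ps z) \<le> a * norm (snd z)" unfolding ps_def a_def by (rule mvmv_norm)
    also have "\<dots> \<le> a * norm z" by (rule mult_left_mono[OF nsnd a0])
    finally show ?thesis .
  qed
  have nch: "norm (ch z) \<le> b * norm z" for z
  proof -
    have "norm (ch z) \<le> norm (T *v (S *v snd z)) + norm (2 *\<^sub>R fst z)" unfolding ch_def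
      by (rule norm_triangle_ineq4)
    also have "\<dots> \<le> norm T * norm S * norm (snd z) + 2 * norm (fst z)"
      using mvmv_norm[of T S "snd z"] by simp
    also have "\<dots> \<le> norm T * norm S * norm z + 2 * norm z"
      using nsnd[of z] nfst[of z] by (intro add_mono mult_left_mono) auto
    finally show ?thesis unfolding b_def by (simp add: algebra_simps)
  qed
  have "ps p \<bullet> ch p - ps q \<bullet> ch q = (ps p - ps q) \<bullet> ch p + ps q \<bullet> (ch p - ch q)"
    by (simp add: inner_diff_left inner_diff_right)
  hence "\<bar>ps p \<bullet> ch p - ps q \<bullet> ch q\<bar> \<le> norm (ps (p - q)) * norm (ch p) + norm (ps q) * norm (ch (p - q))"
    unfolding linps linch
    using abs_triangle_ineq[of "ps (p - q) \<bullet> ch p" "ps q \<bullet> ch (p - q)"]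
      Cauchy_Schwarz_ineq2[of "ps (p - q)" "ch p"] Cauchy_Schwarz_ineq2[of "ps q" "ch (p - q)"]
    by linarith
  also have "\<dots> \<le> (a * norm (p - q)) * (b * norm p) + (a * norm q) * (b * norm (p - q))"
    using nps nch a0 b0 by (intro add_mono mult_mono) auto
  also have "\<dots> = a * b * norm (p - q) * (norm p + norm q)"
    by (simp add: algebra_simps)
  finally show ?thesis unfolding a_def b_def .
qed

lemma diff_sq: "(norm (u2 - x))\<^sup>2 - (norm (u1 - x))\<^sup>2 = (u2 - u1) \<bullet> (u2 + u1 - 2 *\<^sub>R (x::'a::real_inner))"
  by (simp add: power2_norm_eq_inner inner_diff_left inner_diff_right inner_add_left inner_add_right inner_commute algebra_simps)

lemma coupling_marg:
  fixes f :: "('a::euclidean_space) \<Rightarrow> real"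
  assumes g: "\<gamma> \<in> couplings \<pi> \<pi>'" and f: "continuous_on UNIV f"
  shows "integrable \<pi> f \<longleftrightarrow> integrable \<gamma> (\<lambda>z. f (fst z))"
    "integral\<^sup>L \<pi> f = (\<integral>z. f (fst z) \<partial>\<gamma>)"
    "integrable \<pi>' f \<longleftrightarrow> integrable \<gamma> (\<lambda>z. f (snd z))"
    "integral\<^sup>L \<pi>' f = (\<integral>z. f (snd z) \<partial>\<gamma>)"
proof -
  have sg: "sets \<gamma> = sets borel" and d1: "distr \<gamma> borel fst = \<pi>" and d2: "distr \<gamma> borel snd = \<pi>'"
    using g by (auto simp: couplings_def)
  have mf: "fst \<in> measurable \<gamma> borel" using meas_cont[OF sg] continuous_on_fst[OF continuous_on_id] by blast
  have ms: "snd \<in> measurable \<gamma> borel" using meas_cont[OF sg] continuous_on_snd[OF continuous_on_id] by blast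
  have bf: "f \<in> borel_measurable borel" using borel_measurable_continuous_onI[OF f] .
  show "integrable \<pi> f \<longleftrightarrow> integrable \<gamma> (\<lambda>z. f (fst z))"
    using integrable_distr_eq[OF mf bf] d1 by simp
  show "integral\<^sup>L \<pi> f = (\<integral>z. f (fst z) \<partial>\<gamma>)"
    using integral_distr[OF mf bf] d1 by simp
  show "integrable \<pi>' f \<longleftrightarrow> integrable \<gamma> (\<lambda>z. f (snd z))"
    using integrable_distr_eq[OF ms bf] d2 by simp
  show "integral\<^sup>L \<pi>' f = (\<integral>z. f (snd z) \<partial>\<gamma>)"
    using integral_distr[OF ms bf] d2 by simp
qed


lemma norm_sq_prod: "(norm (z::'a::real_normed_vector \<times> 'b::real_normed_vector))\<^sup>2 = (norm (fst z))\<^sup>2 + (norm (snd z))\<^sup>2"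
  by (simp add: norm_prod_def)

lemma amgm: assumes "t > 0" "(a::real) \<ge> 0" "b \<ge> 0" shows "a * b \<le> t / 2 * a\<^sup>2 + 1 / (2 * t) * b\<^sup>2"
proof -
  have "0 \<le> (t * a - b)\<^sup>2" by simp
  hence "2 * t * (a * b) \<le> t\<^sup>2 * a\<^sup>2 + b\<^sup>2" by (simp add: power2_eq_square algebra_simps)
  hence "2 * t * (a * b) \<le> 2 * t * (t / 2 * a\<^sup>2 + 1 / (2 * t) * b\<^sup>2)"
    using assms(1) by (simp add: algebra_simps power2_eq_square)
  thus ?thesis using assms(1) by (simp add: mult_le_cancel_left)
qed

lemma second_moment:
  fixes \<pi> :: "((real^'n) \<times> (real^'m)) measure"
  assumes P: "\<pi> \<in> P_Kc K c" and K: "K \<ge> 0"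
  shows "integrable \<pi> (\<lambda>p. (norm p)\<^sup>2)" "(\<integral>p. (norm p)\<^sup>2 \<partial>\<pi>) \<le> 2 * K"
    "(\<integral>\<^sup>+p. ennreal ((norm p)\<^sup>2) \<partial>\<pi>) \<le> ennreal (2 * K)"
proof -
  note D = PKc_D[OF P]
  have m1[measurable]: "(\<lambda>p. (norm (fst p))\<^sup>2) \<in> borel_measurable \<pi>"
    by (rule meas_cont[OF D(2)]) (intro continuous_intros)
  have m2[measurable]: "(\<lambda>p. (norm (snd p))\<^sup>2) \<in> borel_measurable \<pi>"
    by (rule meas_cont[OF D(2)]) (intro continuous_intros)
  have i1: "integrable \<pi> (\<lambda>p. (norm (fst p))\<^sup>2)"
    by (rule int_quad[OF P, where C=1]) (intro continuous_intros, auto)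
  have i2: "integrable \<pi> (\<lambda>p. (norm (snd p))\<^sup>2)"
    by (rule int_quad[OF P, where C=1]) (intro continuous_intros, auto)
  show "integrable \<pi> (\<lambda>p. (norm p)\<^sup>2)"
    unfolding norm_sq_prod by (rule Bochner_Integration.integrable_add[OF i1 i2])
  have "(\<integral>p. (norm p)\<^sup>2 \<partial>\<pi>) = (\<integral>p. (norm (fst p))\<^sup>2 \<partial>\<pi>) + (\<integral>p. (norm (snd p))\<^sup>2 \<partial>\<pi>)"
    unfolding norm_sq_prod by (rule Bochner_Integration.integral_add[OF i1 i2])
  also have "\<dots> \<le> K + K"
    by (intro add_mono int_bound[OF m1 _ D(3) K] int_bound[OF m2 _ D(4) K]) auto
  finally show "(\<integral>p. (norm p)\<^sup>2 \<partial>\<pi>) \<le> 2 * K" by simp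
  have "(\<integral>\<^sup>+p. ennreal ((norm p)\<^sup>2) \<partial>\<pi>) = (\<integral>\<^sup>+p. ennreal ((norm (fst p))\<^sup>2) + ennreal ((norm (snd p))\<^sup>2) \<partial>\<pi>)"
    unfolding norm_sq_prod by (simp add: ennreal_plus)
  also have "\<dots> = (\<integral>\<^sup>+p. ennreal ((norm (fst p))\<^sup>2) \<partial>\<pi>) + (\<integral>\<^sup>+p. ennreal ((norm (snd p))\<^sup>2) \<partial>\<pi>)"
    by (simp add: nn_integral_add)
  also have "\<dots> \<le> ennreal K + ennreal K" using D(3,4) by (rule add_mono)
  also have "\<dots> = ennreal (2 * K)" using K by (simp add: ennreal_plus[symmetric] del: ennreal_plus)
  finally show "(\<integral>\<^sup>+p. ennreal ((norm p)\<^sup>2) \<partial>\<pi>) \<le> ennreal (2 * K)" .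
qed

lemma coupling_bound:
  fixes \<pi> \<pi>' :: "((real^'n) \<times> (real^'m)) measure" and \<phi> :: "(real^'n) \<times> (real^'m) \<Rightarrow> real"
  assumes P: "\<pi> \<in> P_Kc K c" and P': "\<pi>' \<in> P_Kc K c" and g: "\<gamma> \<in> couplings \<pi> \<pi>'" and K: "K \<ge> 0"
    and cont: "continuous_on UNIV \<phi>" and i1: "integrable \<pi> \<phi>" and i2: "integrable \<pi>' \<phi>"
    and lipf: "\<And>p q. \<bar>\<phi> p - \<phi> q\<bar> \<le> L * norm (p - q) * (norm p + norm q)" and L: "L \<ge> 0"
    and cost: "(\<integral>\<^sup>+ z. ennreal ((norm (fst z - snd z))\<^sup>2) \<partial>\<gamma>) = ennreal cg" and cg: "cg \<ge> 0"
    and t: "t > 0"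
  shows "(\<integral>p. \<phi> p \<partial>\<pi>) - (\<integral>p. \<phi> p \<partial>\<pi>') \<le> L * (t / 2 * cg + 4 * K / t)"
proof -
  have sg: "sets \<gamma> = sets borel" using g by (auto simp: couplings_def)
  have mc[measurable]: "(\<lambda>z. (norm (fst z - snd z))\<^sup>2) \<in> borel_measurable \<gamma>"
    by (rule meas_cont[OF sg]) (intro continuous_intros)
  have ic: "integrable \<gamma> (\<lambda>z. (norm (fst z - snd z))\<^sup>2)"
    by (rule integrableI_bounded[OF mc]) (simp add: cost)
  have Ec: "(\<integral>z. (norm (fst z - snd z))\<^sup>2 \<partial>\<gamma>) = cg"
    using integral_eq_nn_integral[OF mc] cost cg by simp
  have cn: "continuous_on UNIV (\<lambda>p::(real^'n) \<times> (real^'m). (norm p)\<^sup>2)" by (intro continuous_intros)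
  note M1 = coupling_marg[OF g cont] and M2 = coupling_marg[OF g cn]
  have if1: "integrable \<gamma> (\<lambda>z. \<phi> (fst z))" using M1(1) i1 by simp
  have if2: "integrable \<gamma> (\<lambda>z. \<phi> (snd z))" using M1(3) i2 by simp
  have in1: "integrable \<gamma> (\<lambda>z. (norm (fst z))\<^sup>2)" using M2(1) second_moment(1)[OF P K] by simp
  have in2: "integrable \<gamma> (\<lambda>z. (norm (snd z))\<^sup>2)" using M2(3) second_moment(1)[OF P' K] by simp
  have En1: "(\<integral>z. (norm (fst z))\<^sup>2 \<partial>\<gamma>) \<le> 2 * K" using M2(2) second_moment(2)[OF P K] by simp
  have En2: "(\<integral>z. (norm (snd z))\<^sup>2 \<partial>\<gamma>) \<le> 2 * K" using M2(4) second_moment(2)[OF P' K] by simp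
  have "(\<integral>p. \<phi> p \<partial>\<pi>) - (\<integral>p. \<phi> p \<partial>\<pi>') = (\<integral>z. \<phi> (fst z) - \<phi> (snd z) \<partial>\<gamma>)"
    using M1(2,4) Bochner_Integration.integral_diff[OF if1 if2] by simp
  also have "\<dots> \<le> (\<integral>z. L * t / 2 * (norm (fst z - snd z))\<^sup>2 + L / t * (norm (fst z))\<^sup>2 + L / t * (norm (snd z))\<^sup>2 \<partial>\<gamma>)"
  proof (rule integral_mono)
    show "integrable \<gamma> (\<lambda>z. \<phi> (fst z) - \<phi> (snd z))" using if1 if2 by simp
    show "integrable \<gamma> (\<lambda>z. L * t / 2 * (norm (fst z - snd z))\<^sup>2 + L / t * (norm (fst z))\<^sup>2 + L / t * (norm (snd z))\<^sup>2)"
      using ic in1 in2 by simp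
    fix z :: "((real^'n) \<times> (real^'m)) \<times> ((real^'n) \<times> (real^'m))"
    define a where "a = norm (fst z - snd z)"
    define b where "b = norm (fst z) + norm (snd z)"
    have "\<phi> (fst z) - \<phi> (snd z) \<le> L * (a * b)" using lipf[of "fst z" "snd z"] unfolding a_def b_def
      by (simp add: mult.assoc)
    also have "\<dots> \<le> L * (t / 2 * a\<^sup>2 + 1 / (2 * t) * b\<^sup>2)"
      using amgm[OF t, of a b] L unfolding a_def b_def by (intro mult_left_mono) auto
    also have "b\<^sup>2 \<le> 2 * (norm (fst z))\<^sup>2 + 2 * (norm (snd z))\<^sup>2"
    proof -
      have "0 \<le> (norm (fst z) - norm (snd z))\<^sup>2" by simp
      thus ?thesis unfolding b_def power2_sum power2_diff by linarith
    qed
    hence "L * (t / 2 * a\<^sup>2 + 1 / (2 * t) * b\<^sup>2) \<le> L * (t / 2 * a\<^sup>2 + 1 / (2 * t) * (2 * (norm (fst z))\<^sup>2 + 2 * (norm (snd z))\<^sup>2))"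
      using L t by (intro mult_left_mono add_left_mono) auto
    also have "\<dots> = L * t / 2 * a\<^sup>2 + L / t * (norm (fst z))\<^sup>2 + L / t * (norm (snd z))\<^sup>2"
      using t by (simp add: field_simps)
    finally show "\<phi> (fst z) - \<phi> (snd z) \<le> L * t / 2 * (norm (fst z - snd z))\<^sup>2 + L / t * (norm (fst z))\<^sup>2 + L / t * (norm (snd z))\<^sup>2"
      unfolding a_def .
  qed
  also have "\<dots> = L * t / 2 * cg + L / t * (\<integral>z. (norm (fst z))\<^sup>2 \<partial>\<gamma>) + L / t * (\<integral>z. (norm (snd z))\<^sup>2 \<partial>\<gamma>)"
    using ic in1 in2 Ec by simp
  also have "\<dots> \<le> L * t / 2 * cg + L / t * (2 * K) + L / t * (2 * K)"
    using En1 En2 L t by (intro add_mono mult_left_mono) auto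
  also have "\<dots> = L * (t / 2 * cg + 4 * K / t)" by (simp add: field_simps)
  finally show ?thesis .
qed





lemma distr_pair_snd':
  assumes M: "prob_space M" and N: "prob_space N"
  shows "distr (N \<Otimes>\<^sub>M M) M snd = M"
proof (intro measure_eqI)
  fix A assume "A \<in> sets (distr (N \<Otimes>\<^sub>M M) M snd)"
  hence A: "A \<in> sets M" by simp
  have "emeasure (distr (N \<Otimes>\<^sub>M M) M snd) A = emeasure (N \<Otimes>\<^sub>M M) (space N \<times> A)"
    using A by (auto simp add: emeasure_distr space_pair_measure dest: sets.sets_into_space intro!: arg_cong2[where f=emeasure])
  also have "\<dots> = emeasure N (space N) * emeasure M A"
    by (rule sigma_finite_measure.emeasure_pair_measure_Times[OF prob_space_imp_sigma_finite[OF M] sets.top A])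
  also have "\<dots> = emeasure M A" using prob_space.emeasure_space_1[OF N] by simp
  finally show "emeasure (distr (N \<Otimes>\<^sub>M M) M snd) A = emeasure M A" .
qed simp

lemma coupling_nn:
  fixes \<pi> \<pi>' :: "((real^'n) \<times> (real^'m)) measure"
  assumes g: "\<gamma> \<in> couplings \<pi> \<pi>'"
  shows "(\<integral>\<^sup>+z. ennreal ((norm (fst z))\<^sup>2) \<partial>\<gamma>) = (\<integral>\<^sup>+p. ennreal ((norm p)\<^sup>2) \<partial>\<pi>)"
    "(\<integral>\<^sup>+z. ennreal ((norm (snd z))\<^sup>2) \<partial>\<gamma>) = (\<integral>\<^sup>+p. ennreal ((norm p)\<^sup>2) \<partial>\<pi>')"
proof -
  have sg: "sets \<gamma> = sets borel" and d1: "distr \<gamma> borel fst = \<pi>" and d2: "distr \<gamma> borel snd = \<pi>'"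
    using g by (auto simp: couplings_def)
  have mf: "fst \<in> measurable \<gamma> borel" using meas_cont[OF sg] continuous_on_fst[OF continuous_on_id] by blast
  have ms: "snd \<in> measurable \<gamma> borel" using meas_cont[OF sg] continuous_on_snd[OF continuous_on_id] by blast
  have m1r: "(\<lambda>p::(real^'n) \<times> (real^'m). (norm p)\<^sup>2) \<in> borel_measurable (distr \<gamma> borel fst)"
    by (rule meas_cont) (auto intro!: continuous_intros)
  have m2r: "(\<lambda>p::(real^'n) \<times> (real^'m). (norm p)\<^sup>2) \<in> borel_measurable (distr \<gamma> borel snd)"
    by (rule meas_cont) (auto intro!: continuous_intros)
  have m1: "(\<lambda>p::(real^'n) \<times> (real^'m). ennreal ((norm p)\<^sup>2)) \<in> borel_measurable (distr \<gamma> borel fst)"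
    using measurable_compose[OF m1r measurable_ennreal] by simp
  have m2: "(\<lambda>p::(real^'n) \<times> (real^'m). ennreal ((norm p)\<^sup>2)) \<in> borel_measurable (distr \<gamma> borel snd)"
    using measurable_compose[OF m2r measurable_ennreal] by simp
  show "(\<integral>\<^sup>+z. ennreal ((norm (fst z))\<^sup>2) \<partial>\<gamma>) = (\<integral>\<^sup>+p. ennreal ((norm p)\<^sup>2) \<partial>\<pi>)"
    using nn_integral_distr[OF mf m1] d1 by simp
  show "(\<integral>\<^sup>+z. ennreal ((norm (snd z))\<^sup>2) \<partial>\<gamma>) = (\<integral>\<^sup>+p. ennreal ((norm p)\<^sup>2) \<partial>\<pi>')"
    using nn_integral_distr[OF ms m2] d2 by simp
qed

lemma prod_coupling:
  fixes \<pi> \<pi>' :: "((real^'n) \<times> (real^'m)) measure"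
  assumes P: "\<pi> \<in> P_Kc K c" and P': "\<pi>' \<in> P_Kc K c" and K: "K \<ge> 0"
  shows "\<exists>\<gamma>\<in>couplings \<pi> \<pi>'. (\<integral>\<^sup>+ z. ennreal ((norm (fst z - snd z))\<^sup>2) \<partial>\<gamma>) < \<infinity>"
proof
  note D = PKc_D[OF P] and D' = PKc_D[OF P']
  define \<gamma> where "\<gamma> = \<pi> \<Otimes>\<^sub>M \<pi>'"
  have sg: "sets \<gamma> = sets borel"
    unfolding \<gamma>_def using sets_pair_measure_cong[OF D(2) D'(2)] borel_prod by metis
  have "distr \<gamma> borel fst = distr \<gamma> \<pi> fst" by (rule distr_cong) (auto simp: D(2))
  also have "\<dots> = \<pi>" unfolding \<gamma>_def by (rule prob_space.distr_pair_fst[OF D'(1)])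
  finally have d1: "distr \<gamma> borel fst = \<pi>" .
  have "distr \<gamma> borel snd = distr \<gamma> \<pi>' snd" by (rule distr_cong) (auto simp: D'(2))
  also have "\<dots> = \<pi>'" unfolding \<gamma>_def by (rule distr_pair_snd'[OF D'(1) D(1)])
  finally have d2: "distr \<gamma> borel snd = \<pi>'" .
  show g: "\<gamma> \<in> couplings \<pi> \<pi>'"
    unfolding couplings_def using sg d1 d2 prob_space_pair[OF D(1) D'(1)] by (simp add: \<gamma>_def)
  have mf[measurable]: "(\<lambda>z. (norm (fst z))\<^sup>2) \<in> borel_measurable \<gamma>"
    by (rule meas_cont[OF sg]) (intro continuous_intros)
  have ms[measurable]: "(\<lambda>z. (norm (snd z))\<^sup>2) \<in> borel_measurable \<gamma>"
    by (rule meas_cont[OF sg]) (intro continuous_intros)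
  have "(\<integral>\<^sup>+ z. ennreal ((norm (fst z - snd z))\<^sup>2) \<partial>\<gamma>) \<le> (\<integral>\<^sup>+ z. 2 * ennreal ((norm (fst z))\<^sup>2) + 2 * ennreal ((norm (snd z))\<^sup>2) \<partial>\<gamma>)"
  proof (rule nn_integral_mono)
    fix z :: "((real^'n) \<times> (real^'m)) \<times> ((real^'n) \<times> (real^'m))"
    have "ennreal ((norm (fst z - snd z))\<^sup>2) \<le> ennreal (2 * (norm (fst z))\<^sup>2 + 2 * (norm (snd z))\<^sup>2)"
      by (rule ennreal_leI[OF sq_sub_le])
    thus "ennreal ((norm (fst z - snd z))\<^sup>2) \<le> 2 * ennreal ((norm (fst z))\<^sup>2) + 2 * ennreal ((norm (snd z))\<^sup>2)"
      by (simp add: ennreal_plus ennreal_mult)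
  qed
  also have "\<dots> = 2 * (\<integral>\<^sup>+ z. ennreal ((norm (fst z))\<^sup>2) \<partial>\<gamma>) + 2 * (\<integral>\<^sup>+ z. ennreal ((norm (snd z))\<^sup>2) \<partial>\<gamma>)"
    by (simp add: nn_integral_add nn_integral_cmult)
  also have "\<dots> \<le> 2 * ennreal (2 * K) + 2 * ennreal (2 * K)"
    unfolding coupling_nn[OF g] using second_moment(3)[OF P K] second_moment(3)[OF P' K]
    by (intro add_mono mult_left_mono) auto
  also have "\<dots> < \<infinity>" by (simp add: ennreal_mult_less_top)
  finally show "(\<integral>\<^sup>+ z. ennreal ((norm (fst z - snd z))\<^sup>2) \<partial>\<gamma>) < \<infinity>" .
qed


lemma phi_eq:
  fixes T :: "real^'m^'n" and B1 B2 :: "real^'m^'m" and p :: "(real^'n) \<times> (real^'m)"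
  shows "(norm (T *v (B2 *v snd p) - fst p))\<^sup>2 - (norm (T *v (B1 *v snd p) - fst p))\<^sup>2
     = (T *v ((B2 - B1) *v snd p)) \<bullet> (T *v ((B1 + B2) *v snd p) - 2 *\<^sub>R fst p)"
proof -
  have e1: "T *v ((B2 - B1) *v snd p) = T *v (B2 *v snd p) - T *v (B1 *v snd p)"
    by (simp only: matrix_vector_mult_diff_rdistrib matrix_vector_mult_diff_distrib)
  have e2: "T *v ((B1 + B2) *v snd p) = T *v (B2 *v snd p) + T *v (B1 *v snd p)"
    by (simp only: matrix_vector_mult_add_rdistrib matrix_vector_right_distrib add.commute)
  show ?thesis unfolding e1 e2 by (rule diff_sq)
qed


theorem mainTheorem2:
  fixes A :: "real^'n^'m" and K c \<mu> :: real and g :: "real^'m^'m"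
  assumes "CARD('m) \<le> CARD('n)"
    and "rank A = CARD('m)"
    and "K > 0" and "c > 0" and "\<mu> > 0"
  shows "\<exists>C>0. \<forall>(lam::real) (rho :: real^'m^'m \<Rightarrow> real) \<pi> \<pi>' B1 B2.
     lam > 0 \<longrightarrow>
     (\<forall>B. rho differentiable (at B)) \<longrightarrow>
     convex_on UNIV (\<lambda>B. rho B - \<mu> / 2 * (norm B)\<^sup>2) \<longrightarrow>
     (rho has_derivative (\<lambda>H. g \<bullet> H)) (at 0) \<longrightarrow>
     \<pi> \<in> P_Kc K c \<longrightarrow> \<pi>' \<in> P_Kc K c \<longrightarrow>
     (\<forall>B. Fobj A lam rho \<pi> B1 \<le> Fobj A lam rho \<pi> B) \<longrightarrow>
     (\<forall>B. Fobj A lam rho \<pi>' B2 \<le> Fobj A lam rho \<pi>' B) \<longrightarrow>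
     norm (B1 - B2) \<le> C / (lam * \<mu>) * W2 \<pi> \<pi>'"
proof -
  have K0: "K \<ge> 0" using assms(3) by simp
  have rk: "rank (transpose A) = CARD('m)" using assms(2) rank_transpose by metis
  have inj: "inj ((*v) (transpose A))" using full_rank_injective rk by blast
  obtain s where s0: "s > 0" and s: "\<And>v. s * norm v \<le> norm (transpose A *v v)"
    using linear_inj_bounded_below_pos[OF matrix_vector_mul_linear inj] by blast
  define \<kappa> where "\<kappa> = c * s\<^sup>2"
  have kap: "\<kappa> > 0" using assms(4) s0 by (simp add: \<kappa>_def)
  define Bm where "Bm = 2 * norm g / \<mu> + sqrt (4 * K / \<kappa>)"
  define a0 where "a0 = norm (transpose A) + 1"
  define \<beta> where "\<beta> = a0 * (2 * Bm) + 2"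
  have Bm0: "Bm \<ge> 0" using assms(3,5) kap by (simp add: Bm_def)
  have a00: "a0 > 0" unfolding a0_def by (simp add: add_nonneg_pos)
  have \<beta>0: "\<beta> > 0" unfolding \<beta>_def using a00 Bm0 by (simp add: add_nonneg_pos)
  define C where "C = 2 * a0 * \<beta> * sqrt (8 * K)"
  have C0: "C > 0" using a00 \<beta>0 assms(3) by (simp add: C_def)
  show ?thesis
  proof (intro exI[of _ C] conjI allI impI)
    show "C > 0" by (rule C0)
    fix lam :: real and rho :: "real^'m^'m \<Rightarrow> real" and \<pi> \<pi>' :: "((real^'n) \<times> (real^'m)) measure"
      and B1 B2 :: "real^'m^'m"
    assume lam: "lam > 0" and diff: "\<forall>B. rho differentiable (at B)"
      and cvx: "convex_on UNIV (\<lambda>B. rho B - \<mu> / 2 * (norm B)\<^sup>2)"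
      and der: "(rho has_derivative (\<lambda>H. g \<bullet> H)) (at 0)"
      and P: "\<pi> \<in> P_Kc K c" and P': "\<pi>' \<in> P_Kc K c"
      and min1: "\<forall>B. Fobj A lam rho \<pi> B1 \<le> Fobj A lam rho \<pi> B"
      and min2: "\<forall>B. Fobj A lam rho \<pi>' B2 \<le> Fobj A lam rho \<pi>' B"
    have low1: "\<kappa> * (norm B)\<^sup>2 \<le> (\<integral>p. (norm (transpose A *v (B *v snd p)))\<^sup>2 \<partial>\<pi>)" for B
      using lowerE[OF P s less_imp_le[OF s0], of B] by (simp add: \<kappa>_def)
    have low2: "\<kappa> * (norm B)\<^sup>2 \<le> (\<integral>p. (norm (transpose A *v (B *v snd p)))\<^sup>2 \<partial>\<pi>')" for B
      using lowerE[OF P' s less_imp_le[OF s0], of B] by (simp add: \<kappa>_def)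
    have nb1: "norm B1 \<le> Bm" unfolding Bm_def
      by (rule Bbound[OF P lam assms(5) assms(3) kap low1 cvx der min1])
    have nb2: "norm B2 \<le> Bm" unfolding Bm_def
      by (rule Bbound[OF P' lam assms(5) assms(3) kap low2 cvx der min2])
    define d where "d = B2 - B1"
    define S where "S = B1 + B2"
    have nS: "norm S \<le> 2 * Bm" using norm_triangle_ineq[of B1 B2] nb1 nb2 by (simp add: S_def)
    define \<phi> where "\<phi> = (\<lambda>p::(real^'n) \<times> (real^'m). (norm (transpose A *v (B2 *v snd p) - fst p))\<^sup>2 - (norm (transpose A *v (B1 *v snd p) - fst p))\<^sup>2)"
    have gr1: "Fobj A lam rho \<pi> B2 - Fobj A lam rho \<pi> B1 \<ge> lam * \<mu> / 4 * (norm (B2 - B1))\<^sup>2"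
      by (rule growth[OF P lam cvx min1])
    have gr2: "Fobj A lam rho \<pi>' B1 - Fobj A lam rho \<pi>' B2 \<ge> lam * \<mu> / 4 * (norm (B1 - B2))\<^sup>2"
      by (rule growth[OF P' lam cvx min2])
    have i\<phi>1: "integrable \<pi> \<phi>" unfolding \<phi>_def
      by (rule Bochner_Integration.integrable_diff[OF int_Phi[OF P] int_Phi[OF P]])
    have i\<phi>2: "integrable \<pi>' \<phi>" unfolding \<phi>_def
      by (rule Bochner_Integration.integrable_diff[OF int_Phi[OF P'] int_Phi[OF P']])
    have Fd1: "Fobj A lam rho \<pi> B2 - Fobj A lam rho \<pi> B1 = (\<integral>p. \<phi> p \<partial>\<pi>) + lam * (rho B2 - rho B1)"
      unfolding Fobj_def \<phi>_def Bochner_Integration.integral_diff[OF int_Phi[OF P] int_Phi[OF P]]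
      by (simp add: algebra_simps)
    have Fd2: "Fobj A lam rho \<pi>' B1 - Fobj A lam rho \<pi>' B2 = - (\<integral>p. \<phi> p \<partial>\<pi>') + lam * (rho B1 - rho B2)"
      unfolding Fobj_def \<phi>_def Bochner_Integration.integral_diff[OF int_Phi[OF P'] int_Phi[OF P']]
      by (simp add: algebra_simps)
    have nd: "norm (B1 - B2) = norm d" unfolding d_def by (rule norm_minus_commute)
    have gr1': "Fobj A lam rho \<pi> B2 - Fobj A lam rho \<pi> B1 \<ge> lam * \<mu> / 4 * (norm d)\<^sup>2"
      using gr1 unfolding d_def .
    have gr2': "Fobj A lam rho \<pi>' B1 - Fobj A lam rho \<pi>' B2 \<ge> lam * \<mu> / 4 * (norm d)\<^sup>2"
      using gr2 unfolding nd .
    have half: "lam * \<mu> / 2 * (norm d)\<^sup>2 = lam * \<mu> / 4 * (norm d)\<^sup>2 + lam * \<mu> / 4 * (norm d)\<^sup>2"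
      by simp
    have key: "lam * \<mu> / 2 * (norm d)\<^sup>2 \<le> (\<integral>p. \<phi> p \<partial>\<pi>) - (\<integral>p. \<phi> p \<partial>\<pi>')"
    proof -
      have "lam * (rho B1 - rho B2) = - (lam * (rho B2 - rho B1))" by (simp add: algebra_simps)
      thus ?thesis using gr1' gr2' Fd1 Fd2 half by linarith
    qed
    have cont\<phi>: "continuous_on UNIV \<phi>" unfolding \<phi>_def by (intro continuous_intros)
    define L where "L = a0 * norm d * \<beta>"
    have L0: "L \<ge> 0" unfolding L_def using a00 \<beta>0 by simp
    have lip\<phi>: "\<bar>\<phi> p - \<phi> q\<bar> \<le> L * norm (p - q) * (norm p + norm q)" for p q
    proof -
      have "\<bar>\<phi> p - \<phi> q\<bar> \<le> norm (transpose A) * norm d * (norm (transpose A) * norm S + 2) * norm (p - q) * (norm p + norm q)"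
        unfolding \<phi>_def phi_eq d_def S_def by (rule lip)
      also have "\<dots> \<le> L * norm (p - q) * (norm p + norm q)"
      proof -
        have nA: "norm (transpose A) \<le> a0" by (simp add: a0_def)
        have h1: "norm (transpose A) * norm d \<le> a0 * norm d" using nA by (intro mult_right_mono) auto
        have "norm (transpose A) * norm S \<le> a0 * (2 * Bm)" using nA nS a00 by (intro mult_mono) auto
        hence h2: "norm (transpose A) * norm S + 2 \<le> \<beta>" unfolding \<beta>_def by simp
        have "norm (transpose A) * norm d * (norm (transpose A) * norm S + 2) \<le> L"
          unfolding L_def using a00 by (intro mult_mono[OF h1 h2]) auto
        thus ?thesis by (intro mult_right_mono) auto
      qed
      finally show ?thesis .
    qed
    define D where "D = lam * \<mu> * norm d / (2 * a0 * \<beta>)"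
    have D0: "D \<ge> 0" unfolding D_def using lam assms(5) a00 \<beta>0 by simp
    define r where "r = D\<^sup>2 / (8 * K)"
    have r0: "r \<ge> 0" unfolding r_def using assms(3) by simp
    have rle: "ennreal r \<le> (\<integral>\<^sup>+ z. ennreal ((norm (fst z - snd z))\<^sup>2) \<partial>\<gamma>)" if g: "\<gamma> \<in> couplings \<pi> \<pi>'" for \<gamma>
    proof (cases "(\<integral>\<^sup>+ z. ennreal ((norm (fst z - snd z))\<^sup>2) \<partial>\<gamma>) = \<infinity>")
      case True thus ?thesis by simp
    next
      case False
      then obtain cg where cost: "(\<integral>\<^sup>+ z. ennreal ((norm (fst z - snd z))\<^sup>2) \<partial>\<gamma>) = ennreal cg" and cg: "cg \<ge> 0"
        by (cases "(\<integral>\<^sup>+ z. ennreal ((norm (fst z - snd z))\<^sup>2) \<partial>\<gamma>)" rule: ennreal_cases) auto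
      have "r \<le> cg"
      proof (cases "d = 0")
        case True thus ?thesis using cg by (simp add: r_def D_def)
      next
        case False
        have nd0: "norm d > 0" using False by simp
        have Dp: "D > 0" unfolding D_def using nd0 lam assms(5) a00 \<beta>0 by simp
        define t where "t = 8 * K / D"
        have t0: "t > 0" using Dp assms(3) by (simp add: t_def)
        have "lam * \<mu> / 2 * (norm d)\<^sup>2 \<le> L * (t / 2 * cg + 4 * K / t)"
          using key coupling_bound[OF P P' g K0 cont\<phi> i\<phi>1 i\<phi>2 lip\<phi> L0 cost cg t0] by linarith
        hence "(lam * \<mu> / 2 * norm d) * norm d \<le> (a0 * \<beta> * (t / 2 * cg + 4 * K / t)) * norm d"
          unfolding L_def by (simp add: power2_eq_square algebra_simps)
        hence "lam * \<mu> / 2 * norm d \<le> a0 * \<beta> * (t / 2 * cg + 4 * K / t)"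
          using nd0 by (simp only: mult_le_cancel_right)
        hence "D \<le> t / 2 * cg + 4 * K / t"
          unfolding D_def using a00 \<beta>0 by (simp add: divide_le_eq algebra_simps)
        also have "t / 2 * cg + 4 * K / t = 4 * K * cg / D + D / 2"
          using Dp assms(3) by (simp add: t_def field_simps)
        finally have "D \<le> 4 * K * cg / D + D / 2" .
        hence "D * D \<le> 8 * K * cg" using Dp by (simp add: field_simps)
        thus "r \<le> cg" unfolding r_def using assms(3) by (simp add: field_simps power2_eq_square)
      qed
      thus ?thesis using cost by (simp add: ennreal_leI)
    qed
    define I where "I = (INF \<gamma>\<in>couplings \<pi> \<pi>'. \<integral>\<^sup>+ z. ennreal ((norm (fst z - snd z))\<^sup>2) \<partial>\<gamma>)"
    have rI: "ennreal r \<le> I" unfolding I_def by (rule INF_greatest) (rule rle)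
    obtain \<gamma>0 where g0: "\<gamma>0 \<in> couplings \<pi> \<pi>'" and f0: "(\<integral>\<^sup>+ z. ennreal ((norm (fst z - snd z))\<^sup>2) \<partial>\<gamma>0) < \<infinity>"
      using prod_coupling[OF P P' K0] by blast
    have Ifin: "I < \<infinity>" unfolding I_def using INF_lower[OF g0] f0 by (rule le_less_trans)
    have Ifin': "I < top" using Ifin by simp
    have "r \<le> enn2real I" using enn2real_mono[OF rI Ifin'] r0 by simp
    hence "sqrt r \<le> W2 \<pi> \<pi>'" unfolding W2_def I_def by simp
    moreover have "sqrt r = D / sqrt (8 * K)" unfolding r_def using D0 by (simp add: real_sqrt_divide)
    ultimately have DW: "D \<le> sqrt (8 * K) * W2 \<pi> \<pi>'" using assms(3) by (simp add: field_simps)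
    have "norm d = D * (2 * a0 * \<beta>) / (lam * \<mu>)"
      unfolding D_def using lam assms(5) a00 \<beta>0 by (simp add: field_simps)
    also have "\<dots> \<le> (sqrt (8 * K) * W2 \<pi> \<pi>') * (2 * a0 * \<beta>) / (lam * \<mu>)"
      using DW a00 \<beta>0 lam assms(5) by (intro divide_right_mono mult_right_mono) auto
    also have "\<dots> = C / (lam * \<mu>) * W2 \<pi> \<pi>'" by (simp add: C_def field_simps)
    finally show "norm (B1 - B2) \<le> C / (lam * \<mu>) * W2 \<pi> \<pi>'" using nd by simp
  qed
qed


end
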